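(* Under the setting below, for every $\epsilon>0$ there exists a positive integer $T(\epsilon)$ such that for every profile $\boldsymbol{\Psi}=(\Psi_1,\dots,\Psi_N)$ of stationary policies, every initial distribution of the states, and every $i\in\{1,\dots,N\}$, $$\big|V_i(\boldsymbol{\Psi})-V_i^{T(\epsilon)}(\boldsymbol{\Psi})\big|<\epsilon,$$ where for a positive integer $T$, $$V_i^{T}(\boldsymbol{\Psi}):=\frac1T\sum_{t=1}^{T}\sum_{(\boldsymbol{s},\boldsymbol{a})}\mathbb{P}^{\Psi_i}_t(s_i,a_i)\,w_i\Big(\prod_{j\ne i}\mathbb{P}^{\Psi_j}_t(s_j,a_j)\Big)\,v_i\big(U_i(\boldsymbol a)\big)$$ is the average prospect payoff of prosumer $i$ over the first $T$ steps when all prosumers follow $\boldsymbol\Psi$.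
   Context: There are $N$ prosumers. Prosumer $i$ has state set $\mathcal{S}_i=\{0,\dots,S_i^{\max}\}$, action set $\mathcal{A}_i=\mathcal{L}_i\times\mathcal{D}_i$ with $\mathcal{L}_i=\{0,\dots,L_i^{\max}\}$, $\mathcal{D}_i=\{0,\dots,D_i^{\max}\}$, and state dynamics $S_i(t+1)=\min\{[S_i(t)+G_i(t)+D_i(t)-L_i(t)]^+,S_i^{\max}\}$ where $A_i(t)=(L_i(t),D_i(t))$, $[x]^+=\max\{0,x\}$, and in state $s$ only actions $(l,d)$ with $0\le s+d-l\le S_i^{\max}$ are taken. The processes $(G_i(t))_{t\ge1}$, $i=1,\dots,N$, are mutually independent, each i.i.d. and $\mathbb{Z}$-valued with law $G_i$, and $\lambda_i:=\min_{|k|\le S_i^{\max}}\mathbb{P}\{G_i=k\}>0$ for all $i$. A stationary policy $\Psi_i$ draws $A_i(t)$ from a distribution $\Psi_i(\cdot\mid S_i(t))$ depending only on the current state; under a profile of stationary policies the state-action processes of different prosumers are independent, and $\mathbb{P}^{\Psi_j}_t(s,a):=\mathbb{P}^{\Psi_j}\{S_j(t)=s,A_j(t)=a\}$. $U_i(\boldsymbol a)\in\mathbb{R}$ is prosumer $i$'s instantaneous payoff for the joint action $\boldsymbol a$; $w_i:[0,1]\to\mathbb{R}$ is a continuous weighting function and $v_i:\mathbb{R}\to\mathbb{R}$ a valuation function. For a profile of stationary policies, $V_i(\boldsymbol\Psi):=\lim_{T\to\infty}V_i^T(\boldsymbol\Psi)$ (this limit exists and equals $\sum_{(\boldsymbol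 s,\boldsymbol a)}\pi^{\Psi_i}(s_i)\Psi_i(a_i|s_i)\,w_i\big(\prod_{j\ne i}\Psi_j(a_j|s_j)\pi^{\Psi_j}(s_j)\big)v_i(U_i(\boldsymbol a))$, where $\pi^{\Psi_j}$ is the unique stationary distribution of prosumer $j$'s state chain under $\Psi_j$). The sums range over all joint states $\boldsymbol s\in\prod_j\mathcal{S}_j$ and joint actions $\boldsymbol a\in\prod_j\mathcal{A}_j$. *)

theory Defs
  imports "HOL-Probability.Probability"
begin

text \<open>Prosumers are indexed by 1..N. States are naturals in 0..Smax i,
  actions are pairs (l,d) with l in 0..Lmax i and d in 0..Dmax i.\<close>

definition state_set :: "nat \<Rightarrow> nat set" where
  "state_set Smax = {0..Smax}"

definition action_set :: "nat \<Rightarrow> nat \<Rightarrow> (nat \<times> nat) set" where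
  "action_set Lmax Dmax = {0..Lmax} \<times> {0..Dmax}"

definition admissible :: "nat \<Rightarrow> nat \<Rightarrow> nat \<Rightarrow> nat \<Rightarrow> (nat \<times> nat) set" where
  "admissible Smax Lmax Dmax s =
     {(l, d). l \<le> Lmax \<and> d \<le> Dmax \<and> l \<le> s + d \<and> s + d - l \<le> Smax}"

definition next_state :: "nat \<Rightarrow> nat \<Rightarrow> int \<Rightarrow> nat \<times> nat \<Rightarrow> nat" where
  "next_state Smax s g a =
     nat (min (max 0 (int s + g + int (snd a) - int (fst a))) (int Smax))"

text \<open>Distribution of the state S(n+1) of a single prosumer with state cap Smax,
  generation law G, stationary policy Psi and initial distribution mu (law of S(1)).\<close>
primrec state_dist :: "nat \<Rightarrow> int pmf \<Rightarrow> (nat \<Rightarrow> (nat \<times> nat) pmf) \<Rightarrow> nat pmf \<Rightarrow> nat \<Rightarrow> nat pmf" where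
  "state_dist Smax G Psi mu 0 = mu"
| "state_dist Smax G Psi mu (Suc n) =
     bind_pmf (state_dist Smax G Psi mu n)
       (\<lambda>s. bind_pmf (Psi s) (\<lambda>a. map_pmf (\<lambda>g. next_state Smax s g a) G))"

text \<open>P_t(s,a) = P{S(t)=s, A(t)=a}, for t \<ge> 1.\<close>
definition sa_prob :: "nat \<Rightarrow> int pmf \<Rightarrow> (nat \<Rightarrow> (nat \<times> nat) pmf) \<Rightarrow> nat pmf \<Rightarrow> nat
    \<Rightarrow> nat \<Rightarrow> nat \<times> nat \<Rightarrow> real" where
  "sa_prob Smax G Psi mu t s a =
     pmf (bind_pmf (state_dist Smax G Psi mu (t - 1)) (\<lambda>s'. map_pmf (Pair s') (Psi s'))) (s, a)"

definition VT ::
  "nat \<Rightarrow> (nat \<Rightarrow> nat) \<Rightarrow> (nat \<Rightarrow> nat) \<Rightarrow> (nat \<Rightarrow> nat) \<Rightarrow> (nat \<Rightarrow> int pmf)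
   \<Rightarrow> (nat \<Rightarrow> (nat \<Rightarrow> nat \<times> nat) \<Rightarrow> real) \<Rightarrow> (nat \<Rightarrow> real \<Rightarrow> real) \<Rightarrow> (nat \<Rightarrow> real \<Rightarrow> real)
   \<Rightarrow> (nat \<Rightarrow> nat \<Rightarrow> (nat \<times> nat) pmf) \<Rightarrow> (nat \<Rightarrow> nat pmf) \<Rightarrow> nat \<Rightarrow> nat \<Rightarrow> real" where
  "VT N Smax Lmax Dmax G U w v Psi mu i T =
     (1 / real T) * (\<Sum>t = 1..T.
        \<Sum>s \<in> PiE {1..N} (\<lambda>j. state_set (Smax j)).
        \<Sum>a \<in> PiE {1..N} (\<lambda>j. action_set (Lmax j) (Dmax j)).
          sa_prob (Smax i) (G i) (Psi i) (mu i) t (s i) (a i)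
          * w i (\<Prod>j \<in> {1..N} - {i}. sa_prob (Smax j) (G j) (Psi j) (mu j) t (s j) (a j))
          * v i (U i a))"

definition Vlim ::
  "nat \<Rightarrow> (nat \<Rightarrow> nat) \<Rightarrow> (nat \<Rightarrow> nat) \<Rightarrow> (nat \<Rightarrow> nat) \<Rightarrow> (nat \<Rightarrow> int pmf)
   \<Rightarrow> (nat \<Rightarrow> (nat \<Rightarrow> nat \<times> nat) \<Rightarrow> real) \<Rightarrow> (nat \<Rightarrow> real \<Rightarrow> real) \<Rightarrow> (nat \<Rightarrow> real \<Rightarrow> real)
   \<Rightarrow> (nat \<Rightarrow> nat \<Rightarrow> (nat \<times> nat) pmf) \<Rightarrow> (nat \<Rightarrow> nat pmf) \<Rightarrow> nat \<Rightarrow> real" where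
  "Vlim N Smax Lmax Dmax G U w v Psi mu i = lim (\<lambda>T. VT N Smax Lmax Dmax G U w v Psi mu i T)"

definition stationary_profile ::
  "nat \<Rightarrow> (nat \<Rightarrow> nat) \<Rightarrow> (nat \<Rightarrow> nat) \<Rightarrow> (nat \<Rightarrow> nat) \<Rightarrow> (nat \<Rightarrow> nat \<Rightarrow> (nat \<times> nat) pmf) \<Rightarrow> bool" where
  "stationary_profile N Smax Lmax Dmax Psi \<longleftrightarrow>
     (\<forall>j \<in> {1..N}. \<forall>s \<in> state_set (Smax j).
        set_pmf (Psi j s) \<subseteq> admissible (Smax j) (Lmax j) (Dmax j) s)"

end

theory Submission
  imports Defs
begin


lemma next_state_le: "next_state S s g a \<le> S"
  unfolding next_state_def by (simp add: nat_le_iff)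

lemma sd_support:
  assumes "set_pmf mu \<subseteq> {0..S}"
  shows "set_pmf (state_dist S G P mu n) \<subseteq> {0..S}"
  using assms by (induction n) (auto simp: next_state_le)

lemma sd_add: "state_dist S G P mu (n+k) = state_dist S G P (state_dist S G P mu k) n"
  by (induction n) auto

lemma pmf_bind_fin:
  fixes M :: "nat pmf"
  assumes "set_pmf M \<subseteq> {0..S}"
  shows "pmf (bind_pmf M K) x = (\<Sum>s\<in>{0..S}. pmf M s * pmf (K s) x)"
  unfolding pmf_bind
  by (subst integral_measure_pmf_real[of "{0..S}"]) (use assms in \<open>auto simp: mult.commute\<close>)

lemma K_zero:
  assumes "s \<le> S" "set_pmf (P s) \<subseteq> admissible S L D s"
    and lam: "\<forall>k. \<bar>k\<bar> \<le> int S \<longrightarrow> lam \<le> pmf G k"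
  shows "lam \<le> pmf (bind_pmf (P s) (\<lambda>a. map_pmf (\<lambda>g. next_state S s g a) G)) 0"
proof -
  have fin: "finite (admissible S L D s)"
    by (rule finite_subset[of _ "{0..L} \<times> {0..D}"]) (auto simp: admissible_def)
  have key: "lam \<le> pmf (map_pmf (\<lambda>g. next_state S s g a) G) 0" if "a \<in> admissible S L D s" for a
  proof -
    obtain l d where a: "a = (l, d)" by fastforce
    with that have h: "l \<le> s + d" "s + d - l \<le> S" by (auto simp: admissible_def)
    define g where "g = - int (s + d - l)"
    have "\<bar>g\<bar> \<le> int S" using h by (simp add: g_def)
    with lam have "lam \<le> pmf G g" by blast
    also have "pmf G g = measure G {g}" by (simp add: measure_pmf_single)
    also have "\<dots> \<le> measure G ((\<lambda>g. next_state S s g a) -` {0})"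
    proof (rule measure_pmf.finite_measure_mono)
      show "{g} \<subseteq> (\<lambda>g. next_state S s g a) -` {0}"
        using h by (auto simp: a g_def next_state_def of_nat_diff)
    qed auto
    finally show ?thesis by (simp add: pmf_map)
  qed
  have "pmf (bind_pmf (P s) (\<lambda>a. map_pmf (\<lambda>g. next_state S s g a) G)) 0
      = (\<Sum>a\<in>admissible S L D s. pmf (map_pmf (\<lambda>g. next_state S s g a) G) 0 * pmf (P s) a)"
    unfolding pmf_bind
    by (rule integral_measure_pmf_real[OF fin]) (use assms(2) in auto)
  also have "\<dots> \<ge> (\<Sum>a\<in>admissible S L D s. lam * pmf (P s) a)"
    by (rule sum_mono) (auto intro!: mult_right_mono key)
  moreover have "(\<Sum>a\<in>admissible S L D s. lam * pmf (P s) a) = lam"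
    using sum_pmf_eq_1[OF fin assms(2)] by (simp add: sum_distrib_left[symmetric])
  ultimately show ?thesis by simp
qed

lemma contract:
  fixes mu nu :: "nat pmf" and K :: "nat \<Rightarrow> nat pmf"
  assumes mu: "set_pmf mu \<subseteq> {0..S}" and nu: "set_pmf nu \<subseteq> {0..S}"
    and K: "\<forall>s\<le>S. set_pmf (K s) \<subseteq> {0..S}" and K0: "\<forall>s\<le>S. lam \<le> pmf (K s) 0"
  shows "(\<Sum>x\<in>{0..S}. \<bar>pmf (bind_pmf mu K) x - pmf (bind_pmf nu K) x\<bar>)
     \<le> (1 - lam) * (\<Sum>s\<in>{0..S}. \<bar>pmf mu s - pmf nu s\<bar>)"
proof -
  define \<delta> where "\<delta> s = pmf mu s - pmf nu s" for s
  define c where "c x = (if x = 0 then lam else 0)" for x :: nat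
  have s\<delta>: "(\<Sum>s\<in>{0..S}. \<delta> s) = 0"
    using sum_pmf_eq_1[OF _ mu] sum_pmf_eq_1[OF _ nu] by (simp add: \<delta>_def sum_subtractf)
  have eq: "pmf (bind_pmf mu K) x - pmf (bind_pmf nu K) x = (\<Sum>s\<in>{0..S}. \<delta> s * (pmf (K s) x - c x))" for x
  proof -
    have "(\<Sum>s\<in>{0..S}. \<delta> s * (pmf (K s) x - c x))
        = (\<Sum>s\<in>{0..S}. \<delta> s * pmf (K s) x) - (\<Sum>s\<in>{0..S}. \<delta> s) * c x"
      by (simp add: right_diff_distrib sum_subtractf sum_distrib_right)
    also have "\<dots> = (\<Sum>s\<in>{0..S}. \<delta> s * pmf (K s) x)" using s\<delta> by simp
    finally show ?thesis
      by (simp add: pmf_bind_fin[OF mu] pmf_bind_fin[OF nu] \<delta>_def algebra_simps sum_subtractf)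
  qed
  have nn: "0 \<le> pmf (K s) x - c x" if "s \<le> S" for s x
    using K0 that by (auto simp: c_def)
  have "(\<Sum>x\<in>{0..S}. \<bar>pmf (bind_pmf mu K) x - pmf (bind_pmf nu K) x\<bar>)
      \<le> (\<Sum>x\<in>{0..S}. \<Sum>s\<in>{0..S}. \<bar>\<delta> s\<bar> * (pmf (K s) x - c x))"
  proof (rule sum_mono)
    fix x assume "x \<in> {0..S}"
    have "\<bar>\<Sum>s\<in>{0..S}. \<delta> s * (pmf (K s) x - c x)\<bar> \<le> (\<Sum>s\<in>{0..S}. \<bar>\<delta> s * (pmf (K s) x - c x)\<bar>)"
      by (rule sum_abs)
    also have "\<dots> = (\<Sum>s\<in>{0..S}. \<bar>\<delta> s\<bar> * (pmf (K s) x - c x))"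
      by (rule sum.cong) (use nn in \<open>auto simp: abs_mult\<close>)
    finally show "\<bar>pmf (bind_pmf mu K) x - pmf (bind_pmf nu K) x\<bar> \<le> \<dots>" by (simp add: eq)
  qed
  also have "\<dots> = (\<Sum>s\<in>{0..S}. \<bar>\<delta> s\<bar> * (\<Sum>x\<in>{0..S}. pmf (K s) x - c x))"
    by (subst sum.swap) (simp add: sum_distrib_left)
  also have "\<dots> = (\<Sum>s\<in>{0..S}. \<bar>\<delta> s\<bar> * (1 - lam))"
  proof (rule sum.cong)
    fix s assume s: "s \<in> {0..S}"
    have "(\<Sum>x\<in>{0..S}. c x) = lam" by (simp add: c_def)
    then show "\<bar>\<delta> s\<bar> * (\<Sum>x\<in>{0..S}. pmf (K s) x - c x) = \<bar>\<delta> s\<bar> * (1 - lam)"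
      using sum_pmf_eq_1[of "{0..S}" "K s"] K s by (simp add: sum_subtractf)
  qed simp
  finally show ?thesis by (simp add: \<delta>_def sum_distrib_left mult.commute)
qed


lemma chain_conv:
  fixes P :: "nat \<Rightarrow> (nat \<times> nat) pmf" and mu :: "nat pmf"
  assumes mu: "set_pmf mu \<subseteq> {0..S}" and P: "\<forall>s\<le>S. set_pmf (P s) \<subseteq> admissible S L D s"
    and lam: "\<forall>k. \<bar>k\<bar> \<le> int S \<longrightarrow> lam \<le> pmf G k" and lam0: "0 \<le> lam"
  shows "\<bar>pmf (state_dist S G P mu n) x - pmf (state_dist S G P mu (n+k)) x\<bar> \<le> 2 * (1-lam)^n"
proof -
  define mu' where "mu' = state_dist S G P mu k"
  have mu': "set_pmf mu' \<subseteq> {0..S}" unfolding mu'_def by (rule sd_support[OF mu])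
  define Dn where "Dn n = (\<Sum>x\<in>{0..S}. \<bar>pmf (state_dist S G P mu n) x - pmf (state_dist S G P mu' n) x\<bar>)" for n
  have lam1: "lam \<le> 1" using lam[rule_format, of 0] pmf_le_1[of G 0] by simp
  have Kset: "\<forall>s\<le>S. set_pmf (bind_pmf (P s) (\<lambda>a. map_pmf (\<lambda>g. next_state S s g a) G)) \<subseteq> {0..S}"
    by (auto simp: next_state_le)
  have K0: "\<forall>s\<le>S. lam \<le> pmf (bind_pmf (P s) (\<lambda>a. map_pmf (\<lambda>g. next_state S s g a) G)) 0"
    using K_zero P lam by blast
  have D1: "Dn n \<le> (1-lam)^n * Dn 0" for n
  proof (induction n)
    case (Suc n)
    have "Dn (Suc n) \<le> (1 - lam) * Dn n"
      unfolding Dn_def state_dist.simps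
      by (rule contract[OF sd_support[OF mu] sd_support[OF mu'] Kset K0])
    also have "\<dots> \<le> (1 - lam) * ((1-lam)^n * Dn 0)"
      by (rule mult_left_mono[OF Suc]) (use lam1 in simp)
    finally show ?case by simp
  qed simp
  have D2: "Dn 0 \<le> 2"
  proof -
    have "Dn 0 \<le> (\<Sum>x\<in>{0..S}. pmf mu x + pmf mu' x)"
      unfolding Dn_def state_dist.simps
    proof (rule sum_mono)
      fix x show "\<bar>pmf mu x - pmf mu' x\<bar> \<le> pmf mu x + pmf mu' x"
        using pmf_nonneg[of mu x] pmf_nonneg[of mu' x] by linarith
    qed
    also have "\<dots> = 2" using sum_pmf_eq_1[OF _ mu] sum_pmf_eq_1[OF _ mu'] by (simp add: sum.distrib)
    finally show ?thesis .
  qed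
  have Dn: "Dn n \<le> 2 * (1-lam)^n"
  proof -
    have "(1-lam)^n * Dn 0 \<le> (1-lam)^n * 2" if "Dn 0 \<le> 2"
      by (rule mult_left_mono[OF that]) (use lam1 in simp)
    then show ?thesis using D1[of n] D2 by (simp add: mult.commute)
  qed
  show ?thesis
  proof (cases "x \<in> {0..S}")
    case True
    have "\<bar>pmf (state_dist S G P mu n) x - pmf (state_dist S G P mu' n) x\<bar> \<le> Dn n"
      unfolding Dn_def by (rule member_le_sum[OF True]) auto
    then show ?thesis using Dn by (simp add: sd_add mu'_def)
  next
    case False
    then have "pmf (state_dist S G P mu n) x = 0" "pmf (state_dist S G P mu (n+k)) x = 0"
      using sd_support[OF mu, of G P n] sd_support[OF mu, of G P "n+k"]
      by (auto simp: set_pmf_eq)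
    then show ?thesis using lam1 by simp
  qed
qed



lemma sa_prob_eq: "sa_prob S G P mu t x y = pmf (state_dist S G P mu (t-1)) x * pmf (P x) y"
proof -
  have "sa_prob S G P mu t x y = (\<Sum>a\<in>{x}. pmf (map_pmf (Pair a) (P a)) (x, y) * pmf (state_dist S G P mu (t-1)) a)"
    unfolding sa_prob_def pmf_bind
    by (rule integral_measure_pmf_real) (auto simp: pmf_eq_0_set_pmf)
  also have "\<dots> = pmf (P x) y * pmf (state_dist S G P mu (t-1)) x"
    by (simp add: pmf_map_inj' inj_on_def)
  finally show ?thesis by simp
qed

lemma prod_diff_le:
  fixes x y :: "'a \<Rightarrow> real"
  assumes "finite J" "\<forall>j\<in>J. 0 \<le> x j \<and> x j \<le> 1 \<and> 0 \<le> y j \<and> y j \<le> 1"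
  shows "\<bar>prod x J - prod y J\<bar> \<le> (\<Sum>j\<in>J. \<bar>x j - y j\<bar>)"
  using assms
proof (induction J rule: finite_induct)
  case (insert a J)
  then have h: "0 \<le> x a" "x a \<le> 1" "0 \<le> y a" "y a \<le> 1" by auto
  have p: "0 \<le> prod x J" "prod x J \<le> 1" using insert by (auto intro: prod_nonneg prod_le_1)
  have IH: "\<bar>prod x J - prod y J\<bar> \<le> (\<Sum>j\<in>J. \<bar>x j - y j\<bar>)" using insert by auto
  have "prod x (insert a J) - prod y (insert a J) = (x a - y a) * prod x J + y a * (prod x J - prod y J)"
    using insert by (simp add: algebra_simps)
  also have "\<bar>\<dots>\<bar> \<le> \<bar>x a - y a\<bar> * prod x J + y a * \<bar>prod x J - prod y J\<bar>"
    using h p by (simp add: abs_mult abs_triangle_ineq order_trans[OF abs_triangle_ineq])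
  also have "\<dots> \<le> \<bar>x a - y a\<bar> + \<bar>prod x J - prod y J\<bar>"
    using h p by (intro add_mono mult_left_le mult_left_le_one_le) auto
  also have "\<dots> \<le> \<bar>x a - y a\<bar> + (\<Sum>j\<in>J. \<bar>x j - y j\<bar>)" using IH by simp
  finally show ?case using insert by simp
qed simp

lemma cesaro:
  fixes a :: "nat \<Rightarrow> real"
  assumes "\<forall>t. \<bar>a t - L\<bar> \<le> \<eta> + (if t < t0 then C else 0)" "T > 0" "0 \<le> C"
  shows "\<bar>(1/real T) * (\<Sum>t=1..T. a t) - L\<bar> \<le> \<eta> + C * t0 / T"
proof -
  have "(1/real T) * (\<Sum>t=1..T. a t) - L = (1/real T) * (\<Sum>t=1..T. a t - L)"
    using assms(2) by (simp add: sum_subtractf field_simps)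
  also have "\<bar>\<dots>\<bar> \<le> (1/real T) * (\<Sum>t=1..T. \<bar>a t - L\<bar>)"
    by (simp add: abs_mult sum_abs divide_right_mono)
  also have "\<dots> \<le> (1/real T) * (\<Sum>t=1..T. \<eta> + (if t < t0 then C else 0))"
    by (intro mult_left_mono sum_mono) (use assms in auto)
  also have "(\<Sum>t=1..T. \<eta> + (if t < t0 then C else 0)) = T * \<eta> + (\<Sum>t\<in>{t\<in>{1..T}. t < t0}. C)"
    by (simp only: sum.distrib sum.inter_filter[OF finite_atLeastAtMost]) simp
  also have "(\<Sum>t\<in>{t\<in>{1..T}. t < t0}. C) \<le> t0 * C"
  proof -
    have "card {t\<in>{1..T}. t < t0} \<le> card {..<t0}" by (rule card_mono) auto
    then show ?thesis using assms(3) by (simp add: mult_right_mono)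
  qed
  then have "(1/real T) * (T * \<eta> + (\<Sum>t\<in>{t\<in>{1..T}. t < t0}. C)) \<le> (1/real T) * (T * \<eta> + t0 * C)"
    by (intro mult_left_mono) auto
  also have "\<dots> = \<eta> + C * t0 / T" using assms(2) by (simp add: field_simps)
  finally show ?thesis by simp
qed



lemma w_bound:
  assumes "continuous_on {0..1} (w::real\<Rightarrow>real)"
  obtains Mw where "Mw > 0" "\<forall>x\<in>{0..1}. \<bar>w x\<bar> \<le> Mw"
proof -
  have "bounded (w ` {0..1})"
    by (rule compact_imp_bounded[OF compact_continuous_image[OF assms compact_Icc]])
  then obtain b where "b > 0" "\<forall>y\<in>w ` {0..1}. norm y \<le> b" by (auto simp: bounded_pos)
  then show ?thesis using that by auto
qed

lemma term_cont:
  fixes w :: "real \<Rightarrow> real" and V :: "'b \<Rightarrow> real" and SS :: "'a set" and AA :: "'b set"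
  assumes wc: "continuous_on {0..1} w" and fin: "finite SS" "finite AA" "finite J" and eta: "0 < \<eta>"
  shows "\<exists>\<delta>>0. \<forall>q q' :: nat \<Rightarrow> 'a \<Rightarrow> 'b \<Rightarrow> real.
     (\<forall>j s a. 0 \<le> q j s a \<and> q j s a \<le> 1 \<and> 0 \<le> q' j s a \<and> q' j s a \<le> 1) \<longrightarrow>
     (\<forall>j\<in>insert i J. \<forall>s a. \<bar>q j s a - q' j s a\<bar> \<le> \<delta>) \<longrightarrow>
     \<bar>(\<Sum>s\<in>SS. \<Sum>a\<in>AA. q i s a * w (\<Prod>j\<in>J. q j s a) * V a)
      - (\<Sum>s\<in>SS. \<Sum>a\<in>AA. q' i s a * w (\<Prod>j\<in>J. q' j s a) * V a)\<bar> \<le> \<eta>"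
proof -
  obtain Mw where Mw: "Mw > 0" "\<forall>x\<in>{0..1}. \<bar>w x\<bar> \<le> Mw" using w_bound[OF wc] by blast
  define Mv where "Mv = (\<Sum>a\<in>AA. \<bar>V a\<bar>) + 1"
  have Mv0: "Mv > 0" unfolding Mv_def by (smt (verit) sum_nonneg abs_ge_zero)
  have Mv: "\<bar>V a\<bar> \<le> Mv" if "a \<in> AA" for a
    unfolding Mv_def using member_le_sum[OF that, of "\<lambda>a. \<bar>V a\<bar>"] fin by auto
  define \<eta>0 where "\<eta>0 = \<eta> / (real (card SS * card AA) + 1)"
  have \<eta>0: "\<eta>0 > 0" unfolding \<eta>0_def using eta by (simp add: add_nonneg_pos)
  have uc: "uniformly_continuous_on {0..1} w" by (rule compact_uniformly_continuous[OF wc compact_Icc])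
  obtain d1 where d1: "d1 > 0" "\<forall>x\<in>{0..1}. \<forall>y\<in>{0..1}. dist y x < d1 \<longrightarrow> dist (w y) (w x) < \<eta>0 / (2*Mv)"
    using uc[unfolded uniformly_continuous_on_def, rule_format, of "\<eta>0 / (2*Mv)"] \<eta>0 Mv0 by auto
  define \<delta> where "\<delta> = min (d1 / (real (card J) + 1)) (\<eta>0 / (2*Mv*Mw))"
  have \<delta>0: "\<delta> > 0" unfolding \<delta>_def using d1 \<eta>0 Mv0 Mw by auto
  have cJ: "real (card J) * \<delta> < d1"
  proof -
    have "real (card J) * \<delta> \<le> real (card J) * (d1 / (real (card J) + 1))"
      unfolding \<delta>_def by (intro mult_left_mono) auto
    also have "\<dots> < d1" using d1 by (simp add: field_simps)
    finally show ?thesis .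
  qed
  have \<delta>w: "\<delta> * Mw * Mv \<le> \<eta>0 / 2"
  proof -
    have "\<delta> * Mw * Mv \<le> (\<eta>0 / (2*Mv*Mw)) * Mw * Mv"
      unfolding \<delta>_def using Mw Mv0 by (intro mult_right_mono) auto
    also have "\<dots> = \<eta>0 / 2" using Mw Mv0 by (simp add: field_simps)
    finally show ?thesis .
  qed
  show ?thesis
  proof (intro exI[of _ \<delta>] conjI allI impI \<delta>0)
    fix q q' :: "nat \<Rightarrow> 'a \<Rightarrow> 'b \<Rightarrow> real"
    assume rng: "\<forall>j s a. 0 \<le> q j s a \<and> q j s a \<le> 1 \<and> 0 \<le> q' j s a \<and> q' j s a \<le> 1"
      and cl: "\<forall>j\<in>insert i J. \<forall>s a. \<bar>q j s a - q' j s a\<bar> \<le> \<delta>"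
    have tm: "\<bar>q i s a * w (\<Prod>j\<in>J. q j s a) * V a - q' i s a * w (\<Prod>j\<in>J. q' j s a) * V a\<bar> \<le> \<eta>0"
      if a: "a \<in> AA" for s a
    proof -
      define P where "P = (\<Prod>j\<in>J. q j s a)"
      define P' where "P' = (\<Prod>j\<in>J. q' j s a)"
      have PP: "P \<in> {0..1}" "P' \<in> {0..1}" unfolding P_def P'_def using rng
        by (auto intro!: prod_nonneg prod_le_1)
      have "\<bar>P - P'\<bar> \<le> (\<Sum>j\<in>J. \<bar>q j s a - q' j s a\<bar>)"
        unfolding P_def P'_def by (rule prod_diff_le[OF fin(3)]) (use rng in auto)
      also have "\<dots> \<le> (\<Sum>j\<in>J. \<delta>)" by (rule sum_mono) (use cl in auto)
      also have "\<dots> < d1" using cJ by simp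
      finally have "\<bar>w P - w P'\<bar> < \<eta>0 / (2*Mv)"
        using d1(2) PP by (auto simp: dist_real_def abs_minus_commute)
      then have wd: "Mv * \<bar>w P - w P'\<bar> \<le> \<eta>0 / 2" using Mv0
        by (simp add: field_simps)
      have qd: "\<bar>q i s a - q' i s a\<bar> \<le> \<delta>" using cl by auto
      have wP: "\<bar>w P\<bar> \<le> Mw" using Mw PP by auto
      have q'1: "\<bar>q' i s a\<bar> \<le> 1" using rng by auto
      have "q i s a * w P * V a - q' i s a * w P' * V a
          = V a * ((q i s a - q' i s a) * w P + q' i s a * (w P - w P'))"
        by (simp add: algebra_simps)
      also have "\<bar>\<dots>\<bar> \<le> \<bar>V a\<bar> * (\<bar>q i s a - q' i s a\<bar> * \<bar>w P\<bar> + \<bar>q' i s a\<bar> * \<bar>w P - w P'\<bar>)"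
        by (simp add: abs_mult abs_triangle_ineq mult_left_mono order_trans[OF abs_triangle_ineq])
      also have "\<dots> \<le> Mv * (\<delta> * Mw + 1 * \<bar>w P - w P'\<bar>)"
        using Mv[OF a] qd wP q'1 \<delta>0
        by (intro mult_mono add_mono mult_mono') auto
      also have "\<dots> = \<delta> * Mw * Mv + Mv * \<bar>w P - w P'\<bar>" by (simp add: algebra_simps)
      also have "\<dots> \<le> \<eta>0" using \<delta>w wd by simp
      finally show ?thesis unfolding P_def P'_def .
    qed
    have "\<bar>(\<Sum>s\<in>SS. \<Sum>a\<in>AA. q i s a * w (\<Prod>j\<in>J. q j s a) * V a)
      - (\<Sum>s\<in>SS. \<Sum>a\<in>AA. q' i s a * w (\<Prod>j\<in>J. q' j s a) * V a)\<bar>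
      = \<bar>\<Sum>s\<in>SS. \<Sum>a\<in>AA. (q i s a * w (\<Prod>j\<in>J. q j s a) * V a - q' i s a * w (\<Prod>j\<in>J. q' j s a) * V a)\<bar>"
      by (simp add: sum_subtractf)
    also have "\<dots> \<le> (\<Sum>s\<in>SS. \<Sum>a\<in>AA. \<bar>q i s a * w (\<Prod>j\<in>J. q j s a) * V a - q' i s a * w (\<Prod>j\<in>J. q' j s a) * V a\<bar>)"
      by (rule order_trans[OF sum_abs sum_mono]) (rule sum_abs)
    also have "\<dots> \<le> (\<Sum>s\<in>SS. \<Sum>a\<in>AA. \<eta>0)"
      by (intro sum_mono tm)
    also have "\<dots> = real (card SS * card AA) * \<eta>0" by simp
    also have "\<dots> \<le> \<eta>"
    proof -
      have c: "0 \<le> real (card SS * card AA)" by simp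
      have "real (card SS * card AA) * \<eta>0 \<le> (real (card SS * card AA) + 1) * \<eta>0"
        using \<eta>0 by simp
      also have "\<dots> = \<eta>" unfolding \<eta>0_def using c by (simp del: of_nat_mult)
      finally show ?thesis .
    qed
    finally show "\<bar>(\<Sum>s\<in>SS. \<Sum>a\<in>AA. q i s a * w (\<Prod>j\<in>J. q j s a) * V a)
      - (\<Sum>s\<in>SS. \<Sum>a\<in>AA. q' i s a * w (\<Prod>j\<in>J. q' j s a) * V a)\<bar> \<le> \<eta>" .
  qed
qed

lemma term_bound:
  fixes w :: "real \<Rightarrow> real" and V :: "'b \<Rightarrow> real" and SS :: "'a set" and AA :: "'b set"
  assumes wc: "continuous_on {0..1} w" and fin: "finite SS" "finite AA" "finite J"
  shows "\<exists>B\<ge>0. \<forall>q :: nat \<Rightarrow> 'a \<Rightarrow> 'b \<Rightarrow> real.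
     (\<forall>j s a. 0 \<le> q j s a \<and> q j s a \<le> 1) \<longrightarrow>
     \<bar>\<Sum>s\<in>SS. \<Sum>a\<in>AA. q i s a * w (\<Prod>j\<in>J. q j s a) * V a\<bar> \<le> B"
proof -
  obtain Mw where Mw: "Mw > 0" "\<forall>x\<in>{0..1}. \<bar>w x\<bar> \<le> Mw" using w_bound[OF wc] by blast
  define B where "B = (\<Sum>s\<in>SS. \<Sum>a\<in>AA. Mw * \<bar>V a\<bar>)"
  show ?thesis
  proof (intro exI[of _ B] conjI allI impI)
    show "0 \<le> B" unfolding B_def using Mw by (intro sum_nonneg) auto
    fix q :: "nat \<Rightarrow> 'a \<Rightarrow> 'b \<Rightarrow> real"
    assume rng: "\<forall>j s a. 0 \<le> q j s a \<and> q j s a \<le> 1"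
    have "\<bar>\<Sum>s\<in>SS. \<Sum>a\<in>AA. q i s a * w (\<Prod>j\<in>J. q j s a) * V a\<bar>
        \<le> (\<Sum>s\<in>SS. \<Sum>a\<in>AA. \<bar>q i s a * w (\<Prod>j\<in>J. q j s a) * V a\<bar>)"
      by (rule order_trans[OF sum_abs sum_mono]) (rule sum_abs)
    also have "\<dots> \<le> B" unfolding B_def
    proof (intro sum_mono)
      fix s a
      have PP: "(\<Prod>j\<in>J. q j s a) \<in> {0..1}" using rng by (auto intro!: prod_nonneg prod_le_1)
      then have "\<bar>w (\<Prod>j\<in>J. q j s a)\<bar> \<le> Mw" using Mw by auto
      moreover have "\<bar>q i s a\<bar> \<le> 1" using rng by auto
      ultimately have "\<bar>q i s a\<bar> * \<bar>w (\<Prod>j\<in>J. q j s a)\<bar> \<le> 1 * Mw"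
        by (intro mult_mono) auto
      then show "\<bar>q i s a * w (\<Prod>j\<in>J. q j s a) * V a\<bar> \<le> Mw * \<bar>V a\<bar>"
        by (simp add: abs_mult mult_right_mono)
    qed
    finally show "\<bar>\<Sum>s\<in>SS. \<Sum>a\<in>AA. q i s a * w (\<Prod>j\<in>J. q j s a) * V a\<bar> \<le> B" .
  qed
qed



lemma small_div:
  assumes "0 \<le> C" "0 < r"
  shows "\<exists>T0>0. \<forall>T\<ge>T0. C / real T < r"
proof -
  define T0 where "T0 = nat (ceiling (C / r)) + 1"
  have "T0 > 0" by (simp add: T0_def)
  moreover have "C / real T < r" if "T \<ge> T0" for T
  proof -
    have "C / r < real T0" unfolding T0_def by linarith
    also have "\<dots> \<le> real T" using that by simp
    finally have "C < r * real T" using assms by (simp add: field_simps)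
    moreover have "real T > 0" using that \<open>T0 > 0\<close> by simp
    ultimately show ?thesis by (simp add: field_simps)
  qed
  ultimately show ?thesis by blast
qed

lemma chain_conv2:
  fixes P :: "nat \<Rightarrow> (nat \<times> nat) pmf" and mu :: "nat pmf"
  assumes mu: "set_pmf mu \<subseteq> {0..S}" and P: "\<forall>s\<le>S. set_pmf (P s) \<subseteq> admissible S L D s"
    and lam: "\<forall>k. \<bar>k\<bar> \<le> int S \<longrightarrow> lam \<le> pmf G k" and lam0: "0 \<le> lam"
    and "n0 \<le> n" "n0 \<le> m"
  shows "\<bar>pmf (state_dist S G P mu n) x - pmf (state_dist S G P mu m) x\<bar> \<le> 2 * (1-lam)^n0"
proof -
  have lam1: "lam \<le> 1" using lam[rule_format, of 0] pmf_le_1[of G 0] by simp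
  have gen: "\<bar>pmf (state_dist S G P mu n) x - pmf (state_dist S G P mu m) x\<bar> \<le> 2 * (1-lam)^n0"
    if "n0 \<le> n" "n \<le> m" for n m
  proof -
    obtain k where m: "m = n + k" using \<open>n \<le> m\<close> le_Suc_ex by blast
    have "\<bar>pmf (state_dist S G P mu n) x - pmf (state_dist S G P mu m) x\<bar> \<le> 2 * (1-lam)^n"
      unfolding m by (rule chain_conv[OF mu P lam lam0])
    also have "\<dots> \<le> 2 * (1-lam)^n0"
      using lam0 lam1 that by (simp add: power_decreasing)
    finally show ?thesis .
  qed
  show ?thesis
  proof (cases "n \<le> m")
    case True then show ?thesis using gen assms by blast
  next
    case False then show ?thesis using gen[of m n] assms by (simp add: abs_minus_commute)
  qed
qed


lemma main_i:
  fixes N :: nat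
    and Smax Lmax Dmax :: "nat \<Rightarrow> nat"
    and G :: "nat \<Rightarrow> int pmf"
    and U :: "nat \<Rightarrow> (nat \<Rightarrow> nat \<times> nat) \<Rightarrow> real"
    and w v :: "nat \<Rightarrow> real \<Rightarrow> real"
  assumes lambda_pos: "\<forall>i \<in> {1..N}. \<forall>k::int. \<bar>k\<bar> \<le> int (Smax i) \<longrightarrow> pmf (G i) k > 0"
    and w_cont: "\<forall>i \<in> {1..N}. continuous_on {0..1} (w i)"
    and i: "i \<in> {1..N}" and eps: "\<epsilon> > 0"
  shows "\<exists>T0>0. \<forall>T\<ge>T0. \<forall>Psi mu. stationary_profile N Smax Lmax Dmax Psi
              \<longrightarrow> (\<forall>j \<in> {1..N}. set_pmf (mu j) \<subseteq> state_set (Smax j))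
              \<longrightarrow> \<bar>Vlim N Smax Lmax Dmax G U w v Psi mu i
                       - VT N Smax Lmax Dmax G U w v Psi mu i T\<bar> < \<epsilon>"
proof -
  define lamj where "lamj j = Min (pmf (G j) ` {-int (Smax j)..int (Smax j)})" for j
  have lamj_pos: "lamj j > 0" if "j \<in> {1..N}" for j
    unfolding lamj_def using lambda_pos that by (subst Min_gr_iff) auto
  have lamj_le: "lamj j \<le> pmf (G j) k" if "\<bar>k\<bar> \<le> int (Smax j)" for j k
    unfolding lamj_def using that by (intro Min_le) (auto simp: abs_le_iff)
  define lam where "lam = Min (lamj ` {1..N})"
  have lam_pos: "lam > 0" unfolding lam_def using lamj_pos i by (subst Min_gr_iff) auto
  have lam0: "0 \<le> lam" using lam_pos by simp
  have lam_le: "\<forall>k. \<bar>k\<bar> \<le> int (Smax j) \<longrightarrow> lam \<le> pmf (G j) k" if "j \<in> {1..N}" for j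
  proof (intro allI impI)
    fix k assume "\<bar>k\<bar> \<le> int (Smax j)"
    have "lam \<le> lamj j" unfolding lam_def using that by (intro Min_le) auto
    also have "\<dots> \<le> pmf (G j) k" by (rule lamj_le) fact
    finally show "lam \<le> pmf (G j) k" .
  qed
  define SS where "SS = PiE {1..N} (\<lambda>j. state_set (Smax j))"
  define AA where "AA = PiE {1..N} (\<lambda>j. action_set (Lmax j) (Dmax j))"
  define J where "J = {1..N} - {i}"
  define V where "V a = v i (U i a)" for a
  define hyp where "hyp Psi mu \<longleftrightarrow> stationary_profile N Smax Lmax Dmax Psi
              \<and> (\<forall>j \<in> {1..N}. set_pmf (mu j) \<subseteq> state_set (Smax j))" for Psi mu
  define qq where "qq Psi mu t j s a = sa_prob (Smax j) (G j) (Psi j) (mu j) t (s j) (a j)"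
    for Psi mu t j and s :: "nat \<Rightarrow> nat" and a :: "nat \<Rightarrow> nat \<times> nat"
  define aa where "aa Psi mu t = (\<Sum>s\<in>SS. \<Sum>a\<in>AA. qq Psi mu t i s a * w i (\<Prod>j\<in>J. qq Psi mu t j s a) * V a)"
    for Psi mu t
  have VT_eq: "VT N Smax Lmax Dmax G U w v Psi mu i T = (1/real T) * (\<Sum>t=1..T. aa Psi mu t)" for Psi mu T
    by (simp add: VT_def aa_def qq_def SS_def AA_def J_def V_def)
  have rng: "\<forall>j s a. 0 \<le> qq Psi mu t j s a \<and> qq Psi mu t j s a \<le> 1" for Psi mu t
    by (simp add: qq_def sa_prob_def pmf_le_1)
  have finSS: "finite SS" unfolding SS_def state_set_def by (intro finite_PiE) auto
  have finAA: "finite AA" unfolding AA_def action_set_def by (intro finite_PiE) auto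
  have finJ: "finite J" unfolding J_def by simp
  have wc: "continuous_on {0..1} (w i)" using w_cont i by blast
  obtain B where B0: "B \<ge> 0" and B: "\<And>Psi mu t. \<bar>aa Psi mu t\<bar> \<le> B"
  proof -
    obtain B where "B \<ge> 0" and HB: "\<forall>q :: nat \<Rightarrow> (nat \<Rightarrow> nat) \<Rightarrow> (nat \<Rightarrow> nat \<times> nat) \<Rightarrow> real.
     (\<forall>j s a. 0 \<le> q j s a \<and> q j s a \<le> 1) \<longrightarrow>
     \<bar>\<Sum>s\<in>SS. \<Sum>a\<in>AA. q i s a * w i (\<Prod>j\<in>J. q j s a) * V a\<bar> \<le> B"
      using term_bound[OF wc finSS finAA finJ, of i V] by blast
    moreover have "\<bar>aa Psi mu t\<bar> \<le> B" for Psi mu t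
      unfolding aa_def using mp[OF spec[OF HB, of "qq Psi mu t"] rng[of Psi mu t]] .
    ultimately show ?thesis using that by blast
  qed
  have ucauchy: "\<exists>t0. \<forall>Psi mu t t'. hyp Psi mu \<longrightarrow> t0 \<le> t \<longrightarrow> t0 \<le> t' \<longrightarrow> \<bar>aa Psi mu t - aa Psi mu t'\<bar> \<le> \<eta>"
    if \<eta>: "\<eta> > 0" for \<eta>
  proof -
    obtain \<delta> where \<delta>0: "\<delta> > 0" and H\<delta>: "\<forall>q q' :: nat \<Rightarrow> (nat \<Rightarrow> nat) \<Rightarrow> (nat \<Rightarrow> nat \<times> nat) \<Rightarrow> real.
     (\<forall>j s a. 0 \<le> q j s a \<and> q j s a \<le> 1 \<and> 0 \<le> q' j s a \<and> q' j s a \<le> 1) \<longrightarrow>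
     (\<forall>j\<in>insert i J. \<forall>s a. \<bar>q j s a - q' j s a\<bar> \<le> \<delta>) \<longrightarrow>
     \<bar>(\<Sum>s\<in>SS. \<Sum>a\<in>AA. q i s a * w i (\<Prod>j\<in>J. q j s a) * V a)
      - (\<Sum>s\<in>SS. \<Sum>a\<in>AA. q' i s a * w i (\<Prod>j\<in>J. q' j s a) * V a)\<bar> \<le> \<eta>"
      using term_cont[OF wc finSS finAA finJ \<eta>, of i V] by blast
    obtain n0 where n0: "(1-lam)^n0 < \<delta>/2" using real_arch_pow_inv[of "\<delta>/2" "1-lam"] lam_pos \<delta>0 by auto
    show ?thesis
    proof (intro exI[of _ "n0+1"] allI impI)
      fix Psi mu t t' assume h: "hyp Psi mu" and tt: "n0 + 1 \<le> t" "n0 + 1 \<le> t'"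
      have close: "\<forall>j\<in>insert i J. \<forall>s a. \<bar>qq Psi mu t j s a - qq Psi mu t' j s a\<bar> \<le> \<delta>"
      proof (intro ballI allI)
        fix j s a assume j: "j \<in> insert i J"
        then have j1: "j \<in> {1..N}" using i by (auto simp: J_def)
        have mu_j: "set_pmf (mu j) \<subseteq> {0..Smax j}" using h j1 by (auto simp: hyp_def state_set_def)
        have P_j: "\<forall>s\<le>Smax j. set_pmf (Psi j s) \<subseteq> admissible (Smax j) (Lmax j) (Dmax j) s"
          using h j1 by (auto simp: hyp_def stationary_profile_def state_set_def)
        have "\<bar>pmf (state_dist (Smax j) (G j) (Psi j) (mu j) (t-1)) (s j)
             - pmf (state_dist (Smax j) (G j) (Psi j) (mu j) (t'-1)) (s j)\<bar> \<le> 2*(1-lam)^n0"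
          by (rule chain_conv2[OF mu_j P_j lam_le[OF j1] lam0]) (use tt in auto)
        then have d: "\<bar>pmf (state_dist (Smax j) (G j) (Psi j) (mu j) (t-1)) (s j)
             - pmf (state_dist (Smax j) (G j) (Psi j) (mu j) (t'-1)) (s j)\<bar> \<le> \<delta>" using n0 by linarith
        have "\<bar>qq Psi mu t j s a - qq Psi mu t' j s a\<bar>
          = \<bar>pmf (state_dist (Smax j) (G j) (Psi j) (mu j) (t-1)) (s j)
             - pmf (state_dist (Smax j) (G j) (Psi j) (mu j) (t'-1)) (s j)\<bar> * pmf (Psi j (s j)) (a j)"
          unfolding qq_def sa_prob_eq by (simp add: abs_mult left_diff_distrib[symmetric])
        also have "\<dots> \<le> \<bar>pmf (state_dist (Smax j) (G j) (Psi j) (mu j) (t-1)) (s j)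
             - pmf (state_dist (Smax j) (G j) (Psi j) (mu j) (t'-1)) (s j)\<bar> * 1"
          by (intro mult_left_mono pmf_le_1) simp
        finally show "\<bar>qq Psi mu t j s a - qq Psi mu t' j s a\<bar> \<le> \<delta>" using d by simp
      qed
      have r2: "\<forall>j s a. 0 \<le> qq Psi mu t j s a \<and> qq Psi mu t j s a \<le> 1 \<and> 0 \<le> qq Psi mu t' j s a \<and> qq Psi mu t' j s a \<le> 1"
        using rng by blast
      show "\<bar>aa Psi mu t - aa Psi mu t'\<bar> \<le> \<eta>"
        unfolding aa_def using mp[OF mp[OF spec[OF spec[OF H\<delta>, of "qq Psi mu t"], of "qq Psi mu t'"] r2] close] .
    qed
  qed
  have conv: "\<exists>L. (aa Psi mu \<longlonglongrightarrow> L) \<and> \<bar>L\<bar> \<le> B \<and>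
     (\<forall>\<eta> t0. (\<forall>t t'. t0 \<le> t \<longrightarrow> t0 \<le> t' \<longrightarrow> \<bar>aa Psi mu t - aa Psi mu t'\<bar> \<le> \<eta>) \<longrightarrow>
        (\<forall>t\<ge>t0. \<bar>aa Psi mu t - L\<bar> \<le> \<eta>))" if h: "hyp Psi mu" for Psi mu
  proof -
    have "Cauchy (aa Psi mu)"
    proof (rule metric_CauchyI)
      fix e :: real assume "0 < e"
      then obtain t0 where "\<forall>Psi mu t t'. hyp Psi mu \<longrightarrow> t0 \<le> t \<longrightarrow> t0 \<le> t' \<longrightarrow> \<bar>aa Psi mu t - aa Psi mu t'\<bar> \<le> e/2"
        using ucauchy[of "e/2"] by auto
      then have "\<forall>m\<ge>t0. \<forall>n\<ge>t0. dist (aa Psi mu m) (aa Psi mu n) < e"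
        using h \<open>0 < e\<close> by (fastforce simp: dist_real_def)
      then show "\<exists>M. \<forall>m\<ge>M. \<forall>n\<ge>M. dist (aa Psi mu m) (aa Psi mu n) < e" by blast
    qed
    then obtain L where L: "aa Psi mu \<longlonglongrightarrow> L"
      by (auto simp: Cauchy_convergent_iff convergent_def)
    have LB: "\<bar>L\<bar> \<le> B"
      by (rule LIMSEQ_le_const2[OF tendsto_rabs[OF L]]) (use B in auto)
    have tail: "\<bar>aa Psi mu t - L\<bar> \<le> \<eta>"
      if H: "\<forall>t t'. t0 \<le> t \<longrightarrow> t0 \<le> t' \<longrightarrow> \<bar>aa Psi mu t - aa Psi mu t'\<bar> \<le> \<eta>" and t: "t0 \<le> t" for \<eta> t0 t
    proof (rule LIMSEQ_le_const2)
      show "(\<lambda>t'. \<bar>aa Psi mu t - aa Psi mu t'\<bar>) \<longlonglongrightarrow> \<bar>aa Psi mu t - L\<bar>"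
        by (intro tendsto_intros L)
      show "\<exists>N. \<forall>n\<ge>N. \<bar>aa Psi mu t - aa Psi mu n\<bar> \<le> \<eta>" using H t by blast
    qed
    show ?thesis using L LB tail by blast
  qed
  have cbound: "\<bar>VT N Smax Lmax Dmax G U w v Psi mu i T - L\<bar> \<le> \<eta> + 2*B*t0 / T"
    if tail: "\<forall>t\<ge>t0. \<bar>aa Psi mu t - L\<bar> \<le> \<eta>" and LB: "\<bar>L\<bar> \<le> B" and \<eta>: "0 \<le> \<eta>" and T: "T > 0"
    for Psi mu L \<eta> t0 T
  proof -
    have "\<forall>t. \<bar>aa Psi mu t - L\<bar> \<le> \<eta> + (if t < t0 then 2*B else 0)"
    proof
      fix t show "\<bar>aa Psi mu t - L\<bar> \<le> \<eta> + (if t < t0 then 2*B else 0)"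
      proof (cases "t < t0")
        case True
        have "\<bar>aa Psi mu t - L\<bar> \<le> \<bar>aa Psi mu t\<bar> + \<bar>L\<bar>" by (rule abs_triangle_ineq4)
        then show ?thesis using True B[of Psi mu t] LB \<eta> by simp
      next
        case False then show ?thesis using tail by simp
      qed
    qed
    from cesaro[OF this T] B0 show ?thesis by (simp add: VT_eq)
  qed
  obtain t0 where t0: "\<forall>Psi mu t t'. hyp Psi mu \<longrightarrow> t0 \<le> t \<longrightarrow> t0 \<le> t' \<longrightarrow> \<bar>aa Psi mu t - aa Psi mu t'\<bar> \<le> \<epsilon>/4"
    using ucauchy[of "\<epsilon>/4"] eps by auto
  obtain T0 where T0: "T0 > 0" "\<forall>T\<ge>T0. 2*B*t0 / real T < \<epsilon>/4"
    using small_div[of "2*B*t0" "\<epsilon>/4"] B0 eps by auto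
  show ?thesis
  proof (intro exI[of _ T0] conjI allI impI T0(1))
    fix T Psi mu assume T: "T0 \<le> T" and h1: "stationary_profile N Smax Lmax Dmax Psi"
      and h2: "\<forall>j\<in>{1..N}. set_pmf (mu j) \<subseteq> state_set (Smax j)"
    have h: "hyp Psi mu" using h1 h2 by (simp add: hyp_def)
    obtain L where L: "aa Psi mu \<longlonglongrightarrow> L" and LB: "\<bar>L\<bar> \<le> B" and
      tailL: "\<And>\<eta> t0. (\<forall>t t'. t0 \<le> t \<longrightarrow> t0 \<le> t' \<longrightarrow> \<bar>aa Psi mu t - aa Psi mu t'\<bar> \<le> \<eta>) \<Longrightarrow>
        (\<forall>t\<ge>t0. \<bar>aa Psi mu t - L\<bar> \<le> \<eta>)"
      using conv[OF h] by blast
    have VTL: "(\<lambda>T. VT N Smax Lmax Dmax G U w v Psi mu i T) \<longlonglongrightarrow> L"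
    proof (rule LIMSEQ_I)
      fix r :: real assume r: "0 < r"
      obtain t1 where t1: "\<forall>Psi mu t t'. hyp Psi mu \<longrightarrow> t1 \<le> t \<longrightarrow> t1 \<le> t' \<longrightarrow> \<bar>aa Psi mu t - aa Psi mu t'\<bar> \<le> r/4"
        using ucauchy[of "r/4"] r by auto
      obtain T1 where T1: "T1 > 0" "\<forall>T\<ge>T1. 2*B*t1 / real T < r/4"
        using small_div[of "2*B*t1" "r/4"] B0 r by auto
      have "norm (VT N Smax Lmax Dmax G U w v Psi mu i T - L) < r" if "T \<ge> T1" for T
      proof -
        have "\<forall>t\<ge>t1. \<bar>aa Psi mu t - L\<bar> \<le> r/4" by (rule tailL) (use t1 h in blast)
        from cbound[OF this LB] have "\<bar>VT N Smax Lmax Dmax G U w v Psi mu i T - L\<bar> \<le> r/4 + 2*B*t1/T"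
          using r that T1 by auto
        moreover have "2*B*t1 / real T < r/4" using T1(2) that by blast
        ultimately show ?thesis using r by simp
      qed
      then show "\<exists>no. \<forall>n\<ge>no. norm (VT N Smax Lmax Dmax G U w v Psi mu i n - L) < r" by blast
    qed
    have Vl: "Vlim N Smax Lmax Dmax G U w v Psi mu i = L"
      unfolding Vlim_def using VTL by (rule limI)
    have "\<forall>t\<ge>t0. \<bar>aa Psi mu t - L\<bar> \<le> \<epsilon>/4" by (rule tailL) (use t0 h in blast)
    from cbound[OF this LB] have "\<bar>VT N Smax Lmax Dmax G U w v Psi mu i T - L\<bar> \<le> \<epsilon>/4 + 2*B*t0/T"
      using eps T T0 by auto
    then show "\<bar>Vlim N Smax Lmax Dmax G U w v Psi mu i - VT N Smax Lmax Dmax G U w v Psi mu i T\<bar> < \<epsilon>"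
      using T0(2)[rule_format, OF T] eps Vl by (simp add: abs_minus_commute)
  qed
qed


theorem lemma2:
  fixes N :: nat
    and Smax Lmax Dmax :: "nat \<Rightarrow> nat"
    and G :: "nat \<Rightarrow> int pmf"
    and U :: "nat \<Rightarrow> (nat \<Rightarrow> nat \<times> nat) \<Rightarrow> real"
    and w v :: "nat \<Rightarrow> real \<Rightarrow> real"
  assumes lambda_pos: "\<forall>i \<in> {1..N}. \<forall>k::int. \<bar>k\<bar> \<le> int (Smax i) \<longrightarrow> pmf (G i) k > 0"
    and w_cont: "\<forall>i \<in> {1..N}. continuous_on {0..1} (w i)"
  shows "\<forall>\<epsilon>>0. \<exists>T::nat. T > 0 \<and>
           (\<forall>Psi mu. stationary_profile N Smax Lmax Dmax Psi
              \<longrightarrow> (\<forall>j \<in> {1..N}. set_pmf (mu j) \<subseteq> state_set (Smax j))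
              \<longrightarrow> (\<forall>i \<in> {1..N}.
                    \<bar>Vlim N Smax Lmax Dmax G U w v Psi mu i
                       - VT N Smax Lmax Dmax G U w v Psi mu i T\<bar> < \<epsilon>))"
proof (intro allI impI)
  fix \<epsilon> :: real assume eps: "\<epsilon> > 0"
  have "\<forall>i\<in>{1..N}. \<exists>T0. T0 > 0 \<and> (\<forall>T\<ge>T0. \<forall>Psi mu. stationary_profile N Smax Lmax Dmax Psi
              \<longrightarrow> (\<forall>j \<in> {1..N}. set_pmf (mu j) \<subseteq> state_set (Smax j))
              \<longrightarrow> \<bar>Vlim N Smax Lmax Dmax G U w v Psi mu i
                       - VT N Smax Lmax Dmax G U w v Psi mu i T\<bar> < \<epsilon>)"
    using main_i[OF lambda_pos w_cont _ eps] by blast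
  then obtain T0 where T0: "\<forall>i\<in>{1..N}. T0 i > 0 \<and> (\<forall>T\<ge>T0 i. \<forall>Psi mu. stationary_profile N Smax Lmax Dmax Psi
              \<longrightarrow> (\<forall>j \<in> {1..N}. set_pmf (mu j) \<subseteq> state_set (Smax j))
              \<longrightarrow> \<bar>Vlim N Smax Lmax Dmax G U w v Psi mu i
                       - VT N Smax Lmax Dmax G U w v Psi mu i T\<bar> < \<epsilon>)"
    by (metis (no_types, lifting) bchoice)
  define T where "T = Max (insert 1 (T0 ` {1..N}))"
  have T1: "T \<ge> 1" unfolding T_def by (intro Max_ge) auto
  have Ti: "T0 i \<le> T" if "i \<in> {1..N}" for i unfolding T_def using that by (intro Max_ge) auto
  show "\<exists>T::nat. T > 0 \<and>
           (\<forall>Psi mu. stationary_profile N Smax Lmax Dmax Psi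
              \<longrightarrow> (\<forall>j \<in> {1..N}. set_pmf (mu j) \<subseteq> state_set (Smax j))
              \<longrightarrow> (\<forall>i \<in> {1..N}.
                    \<bar>Vlim N Smax Lmax Dmax G U w v Psi mu i
                       - VT N Smax Lmax Dmax G U w v Psi mu i T\<bar> < \<epsilon>))"
    using T1 Ti T0 by (intro exI[of _ T]) auto
qed

end
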